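(* Let $G$ be a group definable in some first-order structure, satisfying the descending chain condition on definable subgroups. Then: (a) every maximal nilpotent subgroup of $G$ is definable; (a') if $Q$ is a Cartan subgroup of $G$, then $Q$ is definable and $Q^\circ$ is a Carter subgroup of $G$; (b) if $Q$ is a Carter subgroup of $G$, then $Q$ is contained in a maximal nilpotent subgroup $\tilde Q$ of $G$, and every such $\tilde Q$ is a Cartan subgroup of $G$ with $\tilde Q^\circ=Q$.
   Context: The descending chain condition means every strictly descending chain of definable subgroups is finite. For a definable subgroup $H$, $H^\circ$ denotes the smallest definable subgroup of finite index in $H$ (it exists by the chain condition); $H$ is definably connected if $H=H^\circ$. A Cartan subgroup of $G$ is a maximal nilpotent subgroup $Q$ such that every normal finite-index subgroup $X$ of $Q$ has finite index in $N_G(X)$. A Carter subgroup of $G$ is a definable, definably connected, nilpotent subgroup $Q$ of finite index in $N_G(Q)$. *)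

theory Defs
  imports "HOL-Algebra.Algebra" "HOL-Algebra.Group_Action"
begin

(* First-order formulas over the group language (multiplication atom) expanded by
   arbitrary relation symbols of type 'r (the extra structure). Variables are nat. *)
datatype 'r fm =
    Rel 'r "nat list"
  | Eq nat nat
  | Mul nat nat nat
  | Neg "'r fm"
  | Conj "'r fm" "'r fm"
  | Ex nat "'r fm"

fun sat :: "('a, 'b) monoid_scheme \<Rightarrow> ('r \<Rightarrow> 'a list set) \<Rightarrow> 'r fm \<Rightarrow> (nat \<Rightarrow> 'a) \<Rightarrow> bool" where
  "sat G R (Rel r vs) e = (map e vs \<in> R r)"
| "sat G R (Eq i j) e = (e i = e j)"
| "sat G R (Mul i j k) e = (e i \<otimes>\<^bsub>G\<^esub> e j = e k)"
| "sat G R (Neg \<phi>) e = (\<not> sat G R \<phi> e)"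
| "sat G R (Conj \<phi> \<psi>) e = (sat G R \<phi> e \<and> sat G R \<psi> e)"
| "sat G R (Ex n \<phi>) e = (\<exists>x\<in>carrier G. sat G R \<phi> (e(n := x)))"

definition definable :: "('a, 'b) monoid_scheme \<Rightarrow> ('r \<Rightarrow> 'a list set) \<Rightarrow> 'a set \<Rightarrow> bool" where
  "definable G R S \<longleftrightarrow> (\<exists>\<phi> e. (\<forall>i. e i \<in> carrier G) \<and>
      S = {x \<in> carrier G. sat G R \<phi> (e(0 := x))})"

definition def_subgroup :: "('a, 'b) monoid_scheme \<Rightarrow> ('r \<Rightarrow> 'a list set) \<Rightarrow> 'a set \<Rightarrow> bool" where
  "def_subgroup G R H \<longleftrightarrow> subgroup H G \<and> definable G R H"

definition dcc :: "('a, 'b) monoid_scheme \<Rightarrow> ('r \<Rightarrow> 'a list set) \<Rightarrow> bool" where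
  "dcc G R \<longleftrightarrow> \<not> (\<exists>f :: nat \<Rightarrow> 'a set. \<forall>n. def_subgroup G R (f n) \<and> f (Suc n) \<subset> f n)"

definition fin_index :: "('a, 'b) monoid_scheme \<Rightarrow> 'a set \<Rightarrow> 'a set \<Rightarrow> bool" where
  "fin_index G K H \<longleftrightarrow> K \<subseteq> H \<and> finite {K #>\<^bsub>G\<^esub> h | h. h \<in> H}"

fun lcs :: "('a, 'b) monoid_scheme \<Rightarrow> 'a set \<Rightarrow> nat \<Rightarrow> 'a set" where
  "lcs G H 0 = H"
| "lcs G H (Suc n) = generate G
     {x \<otimes>\<^bsub>G\<^esub> y \<otimes>\<^bsub>G\<^esub> inv\<^bsub>G\<^esub> x \<otimes>\<^bsub>G\<^esub> inv\<^bsub>G\<^esub> y | x y. x \<in> lcs G H n \<and> y \<in> H}"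

definition nilpotent_subgroup :: "('a, 'b) monoid_scheme \<Rightarrow> 'a set \<Rightarrow> bool" where
  "nilpotent_subgroup G H \<longleftrightarrow> subgroup H G \<and> (\<exists>n. lcs G H n = {\<one>\<^bsub>G\<^esub>})"

definition max_nilpotent :: "('a, 'b) monoid_scheme \<Rightarrow> 'a set \<Rightarrow> bool" where
  "max_nilpotent G H \<longleftrightarrow> nilpotent_subgroup G H \<and>
     (\<forall>K. nilpotent_subgroup G K \<and> H \<subseteq> K \<longrightarrow> K = H)"

(* H\<degree>: smallest definable subgroup of finite index in H (intersection of all of them;
   under dcc this intersection is itself one of them) *)
definition conn_comp :: "('a, 'b) monoid_scheme \<Rightarrow> ('r \<Rightarrow> 'a list set) \<Rightarrow> 'a set \<Rightarrow> 'a set" where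
  "conn_comp G R H = \<Inter> {K. def_subgroup G R K \<and> fin_index G K H}"

definition cartan :: "('a, 'b) monoid_scheme \<Rightarrow> 'a set \<Rightarrow> bool" where
  "cartan G Q \<longleftrightarrow> max_nilpotent G Q \<and>
     (\<forall>N. N \<lhd> (G\<lparr>carrier := Q\<rparr>) \<and> fin_index G N Q \<longrightarrow> fin_index G N (normalizer G N))"

definition carter :: "('a, 'b) monoid_scheme \<Rightarrow> ('r \<Rightarrow> 'a list set) \<Rightarrow> 'a set \<Rightarrow> bool" where
  "carter G R Q \<longleftrightarrow> def_subgroup G R Q \<and> conn_comp G R Q = Q \<and>
     nilpotent_subgroup G Q \<and> fin_index G Q (normalizer G Q)"

end

theory Submission
  imports Defs
begin

fun ren :: "(nat \<Rightarrow> nat) \<Rightarrow> 'r fm \<Rightarrow> 'r fm" where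
  "ren f (Rel r vs) = Rel r (map f vs)"
| "ren f (Eq i j) = Eq (f i) (f j)"
| "ren f (Mul i j k) = Mul (f i) (f j) (f k)"
| "ren f (Neg \<phi>) = Neg (ren f \<phi>)"
| "ren f (Conj \<phi> \<psi>) = Conj (ren f \<phi>) (ren f \<psi>)"
| "ren f (Ex n \<phi>) = Ex (f n) (ren f \<phi>)"

lemma sat_ren: "inj f \<Longrightarrow> sat G R (ren f \<phi>) E = sat G R \<phi> (E \<circ> f)"
proof (induction \<phi> arbitrary: E)
  case (Ex n \<phi>)
  have "\<And>x. (E(f n := x)) \<circ> f = (E \<circ> f)(n := x)"
    using Ex.prems by (auto simp: fun_eq_iff inj_eq)
  have "sat G R (ren f (Ex n \<phi>)) E = (\<exists>x\<in>carrier G. sat G R (ren f \<phi>) (E(f n:=x)))" by simp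
  also have "\<dots> = (\<exists>x\<in>carrier G. sat G R \<phi> ((E(f n:=x)) \<circ> f))" by (rule bex_cong[OF refl], rule Ex.IH[OF Ex.prems])
  also have "\<dots> = sat G R (Ex n \<phi>) (E \<circ> f)" unfolding \<open>\<And>x. (E(f n := x)) \<circ> f = (E \<circ> f)(n := x)\<close> by simp
  finally show ?case .
qed (simp_all add: comp_def)

definition mg :: "(nat \<Rightarrow> 'a) \<Rightarrow> (nat \<Rightarrow> 'a) \<Rightarrow> nat \<Rightarrow> 'a" where
  "mg e p = (\<lambda>i. if even i then e (i div 2) else p (i div 2))"

definition fd :: "('a, 'b) monoid_scheme \<Rightarrow> ('r \<Rightarrow> 'a list set) \<Rightarrow> ((nat \<Rightarrow> 'a) \<Rightarrow> bool) \<Rightarrow> bool" where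
  "fd G R P \<longleftrightarrow> (\<exists>(\<phi>::'r fm) p. (\<forall>i. p i \<in> carrier G) \<and>
      (\<forall>e. (\<forall>i. e i \<in> carrier G) \<longrightarrow> (P e = sat G R \<phi> (mg e p))))"

lemma fdI: "(\<forall>i. p i \<in> carrier G) \<Longrightarrow> (\<And>e. (\<forall>i. e i \<in> carrier G) \<Longrightarrow> P e = sat G R \<phi> (mg e p)) \<Longrightarrow> fd G R P"
  unfolding fd_def by blast

lemma fd_cong: "fd G R P \<Longrightarrow> (\<And>e. (\<forall>i. e i \<in> carrier G) \<Longrightarrow> P e = Q e) \<Longrightarrow> fd G R Q"
  unfolding fd_def by metis

lemma fd_neg: "fd G R P \<Longrightarrow> fd G R (\<lambda>e. \<not> P e)"
  unfolding fd_def by (metis sat.simps(4))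

lemma mg_even[simp]: "mg e p (2*i) = e i" and mg_odd[simp]: "mg e p (2*i+1) = p i"
  by (auto simp: mg_def)

lemma fd_conj: assumes "fd G R P" "fd G R Q" shows "fd G R (\<lambda>e. P e \<and> Q e)"
proof -
  obtain \<phi>1 p1 where 1: "\<forall>i. p1 i \<in> carrier G" "\<And>e. (\<forall>i. e i \<in> carrier G) \<Longrightarrow> P e = sat G R \<phi>1 (mg e p1)"
    using assms(1) unfolding fd_def by blast
  obtain \<phi>2 p2 where 2: "\<forall>i. p2 i \<in> carrier G" "\<And>e. (\<forall>i. e i \<in> carrier G) \<Longrightarrow> Q e = sat G R \<phi>2 (mg e p2)"
    using assms(2) unfolding fd_def by blast
  define F1 where "F1 = (\<lambda>n::nat. if even n then n else 2*n - 1)"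
  define F2 where "F2 = (\<lambda>n::nat. if even n then n else 2*n + 1)"
  define q where "q = (\<lambda>j::nat. if even j then p1 (j div 2) else p2 (j div 2))"
  have i1: "inj F1" unfolding F1_def inj_def by presburger
  have i2: "inj F2" unfolding F2_def inj_def by presburger
  have e1: "mg e q \<circ> F1 = mg e p1" for e
  proof
    fix x show "(mg e q \<circ> F1) x = mg e p1 x"
    proof (cases "even x")
      case False then obtain j where "x = 2*j+1" by (metis oddE)
      then show ?thesis unfolding F1_def mg_def q_def comp_def by simp presburger?
    qed (simp add: F1_def mg_def)
  qed
  have e2: "mg e q \<circ> F2 = mg e p2" for e
  proof
    fix x show "(mg e q \<circ> F2) x = mg e p2 x"
    proof (cases "even x")
      case False then obtain j where "x = 2*j+1" by (metis oddE)
      then show ?thesis unfolding F2_def mg_def q_def comp_def by simp presburger?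
    qed (simp add: F2_def mg_def)
  qed
  show ?thesis
  proof (rule fdI[where p = q and \<phi> = "Conj (ren F1 \<phi>1) (ren F2 \<phi>2)"])
    show "\<forall>i. q i \<in> carrier G" using 1 2 by (simp add: q_def)
    fix e :: "nat \<Rightarrow> 'a" assume "\<forall>i. e i \<in> carrier G"
    then show "(P e \<and> Q e) = sat G R (Conj (ren F1 \<phi>1) (ren F2 \<phi>2)) (mg e q)"
      using 1 2 by (simp add: sat_ren[OF i1] sat_ren[OF i2] e1 e2)
  qed
qed

lemma fd_ex: assumes "fd G R P" shows "fd G R (\<lambda>e. \<exists>x\<in>carrier G. P (e(k := x)))"
proof -
  obtain \<phi> p where 1: "\<forall>i. p i \<in> carrier G" "\<And>e. (\<forall>i. e i \<in> carrier G) \<Longrightarrow> P e = sat G R \<phi> (mg e p)"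
    using assms(1) unfolding fd_def by blast
  have u: "(mg e p)(2*k := x) = mg (e(k:=x)) p" for e x
    unfolding mg_def fun_eq_iff by auto
  show ?thesis
  proof (rule fdI[where p = p and \<phi> = "Ex (2*k) \<phi>"])
    show "\<forall>i. p i \<in> carrier G" using 1 by simp
    fix e :: "nat \<Rightarrow> 'a" assume e: "\<forall>i. e i \<in> carrier G"
    show "(\<exists>x\<in>carrier G. P (e(k := x))) = sat G R (Ex (2 * k) \<phi>) (mg e p)"
      using 1(2)[of "e(k:=_)"] e by (auto simp: u)
  qed
qed

lemma fd_eq: "c \<in> carrier G \<Longrightarrow> fd G R (\<lambda>e. e i = e j)"
  by (rule fdI[where p = "\<lambda>_. c" and \<phi> = "Eq (2*i) (2*j)"]) (auto simp: mg_def)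

lemma fd_const: "c \<in> carrier G \<Longrightarrow> fd G R (\<lambda>e. e i = c)"
  by (rule fdI[where p = "\<lambda>_. c" and \<phi> = "Eq (2*i) 1"]) (auto simp: mg_def)

lemma fd_mul: "c \<in> carrier G \<Longrightarrow> fd G R (\<lambda>e. e i \<otimes>\<^bsub>G\<^esub> e j = e k)"
  by (rule fdI[where p = "\<lambda>_. c" and \<phi> = "Mul (2*i) (2*j) (2*k)"]) (auto simp: mg_def)

lemma fd_mulc: "c \<in> carrier G \<Longrightarrow> fd G R (\<lambda>e. e i \<otimes>\<^bsub>G\<^esub> e j = c)"
  by (rule fdI[where p = "\<lambda>_. c" and \<phi> = "Mul (2*i) (2*j) 1"]) (auto simp: mg_def)

lemma set_fd: assumes "definable G R S" shows "fd G R (\<lambda>e. e k \<in> S)"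
proof -
  obtain \<phi> e0 where 1: "\<forall>i. e0 i \<in> carrier G" "S = {x \<in> carrier G. sat G R \<phi> (e0(0 := x))}"
    using assms unfolding definable_def by blast
  define F where "F = (\<lambda>n::nat. if n = 0 then 2*k else 2*n+1)"
  have i: "inj F" unfolding F_def inj_def by presburger
  have c: "mg e e0 \<circ> F = e0(0 := e k)" for e :: "nat \<Rightarrow> 'a"
    unfolding F_def fun_eq_iff comp_def by (simp add: mg_def)
  show ?thesis
  proof (rule fdI[where p = e0 and \<phi> = "ren F \<phi>"])
    show "\<forall>i. e0 i \<in> carrier G" using 1 by simp
    fix e :: "nat \<Rightarrow> 'a" assume "\<forall>i. e i \<in> carrier G"
    then show "(e k \<in> S) = sat G R (ren F \<phi>) (mg e e0)"
      using 1 by (simp add: sat_ren[OF i] c)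
  qed
qed

lemma fd_set: assumes "fd G R (\<lambda>e. P (e 0))" "c \<in> carrier G"
  shows "definable G R {x \<in> carrier G. P x}"
proof -
  obtain \<phi> p where 1: "\<forall>i. p i \<in> carrier G" "\<And>e. (\<forall>i. e i \<in> carrier G) \<Longrightarrow> P (e 0) = sat G R \<phi> (mg e p)"
    using assms(1) unfolding fd_def by blast
  have u: "mg ((\<lambda>_. c)(0:=x)) p = (mg (\<lambda>_. c) p)(0 := x)" for x
    unfolding mg_def fun_eq_iff by auto
  have "{x \<in> carrier G. P x} = {x \<in> carrier G. sat G R \<phi> ((mg (\<lambda>_. c) p)(0 := x))}"
    using 1(2)[of "(\<lambda>_. c)(0:=_)"] assms(2) by (auto simp: u)
  moreover have "\<forall>i. mg (\<lambda>_. c) p i \<in> carrier G" using 1 assms(2) by (simp add: mg_def)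
  ultimately show ?thesis unfolding definable_def by blast
qed

datatype 'a tm = V nat | Cn 'a | Mt "'a tm" "'a tm" | Iv "'a tm"

primrec ev :: "('a, 'b) monoid_scheme \<Rightarrow> (nat \<Rightarrow> 'a) \<Rightarrow> 'a tm \<Rightarrow> 'a" where
  "ev G e (V i) = e i"
| "ev G e (Cn a) = a"
| "ev G e (Mt s t) = ev G e s \<otimes>\<^bsub>G\<^esub> ev G e t"
| "ev G e (Iv t) = inv\<^bsub>G\<^esub> ev G e t"

primrec tv :: "'a tm \<Rightarrow> nat set" where
  "tv (V i) = {i}" | "tv (Cn a) = {}" | "tv (Mt s t) = tv s \<union> tv t" | "tv (Iv t) = tv t"

primrec tc :: "'a tm \<Rightarrow> 'a set" where
  "tc (V i) = {}" | "tc (Cn a) = {a}" | "tc (Mt s t) = tc s \<union> tc t" | "tc (Iv t) = tc t"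

lemma tv_finite[simp]: "finite (tv t)" by (induction t) auto

lemma ev_cong: "(\<And>i. i \<in> tv t \<Longrightarrow> e i = e' i) \<Longrightarrow> ev G e t = ev G e' t"
  by (induction t) auto

lemma ev_upd[simp]: "m \<notin> tv t \<Longrightarrow> ev G (e(m:=x)) t = ev G e t"
  by (rule ev_cong) auto

lemma fresh: "finite A \<Longrightarrow> Suc (Max (insert k A)) \<notin> insert k A"
  using Max_ge[of "insert k A"] by (metis Suc_n_not_le_n finite_insert)

context group begin

lemma ev_carrier: "(\<forall>i. e i \<in> carrier G) \<Longrightarrow> tc t \<subseteq> carrier G \<Longrightarrow> ev G e t \<in> carrier G"
  by (induction t) auto

lemma fd_tm: "tc t \<subseteq> carrier G \<Longrightarrow> k \<notin> tv t \<Longrightarrow> fd G R (\<lambda>e. e k = ev G e t)"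
proof (induction t arbitrary: k)
  case (V i) then show ?case using fd_eq[OF one_closed] by simp
next
  case (Cn a) then show ?case using fd_const by simp
next
  case (Mt s t)
  define m1 where "m1 = Suc (Max (insert k (tv s \<union> tv t)))"
  define m2 where "m2 = Suc m1"
  have f1: "m1 \<notin> insert k (tv s \<union> tv t)" unfolding m1_def by (rule fresh) simp
  have f2: "m2 \<notin> insert k (tv s \<union> tv t)" using Max_ge[of "insert k (tv s \<union> tv t)"]
    unfolding m2_def m1_def by (metis Suc_n_not_le_n finite_Un finite_insert le_Suc_eq tv_finite)
  have d: "m1 \<noteq> m2" unfolding m2_def by simp
  have "fd G R (\<lambda>e. (e m1 = ev G e s \<and> e m2 = ev G e t) \<and> e m1 \<otimes> e m2 = e k)"
    using Mt f1 f2 by (intro fd_conj fd_mul[OF one_closed]) auto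
  then have "fd G R (\<lambda>e. \<exists>y\<in>carrier G. \<exists>x\<in>carrier G. 
     ((e(m1:=y,m2:=x)) m1 = ev G (e(m1:=y,m2:=x)) s \<and> (e(m1:=y,m2:=x)) m2 = ev G (e(m1:=y,m2:=x)) t)
       \<and> (e(m1:=y,m2:=x)) m1 \<otimes> (e(m1:=y,m2:=x)) m2 = (e(m1:=y,m2:=x)) k)"
    by (intro fd_ex)
  then show ?case
  proof (rule fd_cong)
    fix e :: "nat \<Rightarrow> 'a" assume e: "\<forall>i. e i \<in> carrier G"
    have "ev G e s \<in> carrier G" "ev G e t \<in> carrier G" using Mt.prems e by (auto intro: ev_carrier)
    then show "(\<exists>y\<in>carrier G. \<exists>x\<in>carrier G. 
     ((e(m1:=y,m2:=x)) m1 = ev G (e(m1:=y,m2:=x)) s \<and> (e(m1:=y,m2:=x)) m2 = ev G (e(m1:=y,m2:=x)) t)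
       \<and> (e(m1:=y,m2:=x)) m1 \<otimes> (e(m1:=y,m2:=x)) m2 = (e(m1:=y,m2:=x)) k) = (e k = ev G e (Mt s t))"
      using f1 f2 d by auto
  qed
next
  case (Iv t)
  define m where "m = Suc (Max (insert k (tv t)))"
  have f: "m \<notin> insert k (tv t)" unfolding m_def by (rule fresh) simp
  have "fd G R (\<lambda>e. e m = ev G e t \<and> e m \<otimes> e k = \<one>)"
    using Iv f by (intro fd_conj fd_mulc) auto
  then have "fd G R (\<lambda>e. \<exists>x\<in>carrier G. (e(m:=x)) m = ev G (e(m:=x)) t \<and> (e(m:=x)) m \<otimes> (e(m:=x)) k = \<one>)"
    by (intro fd_ex)
  then show ?case
  proof (rule fd_cong)
    fix e :: "nat \<Rightarrow> 'a" assume e: "\<forall>i. e i \<in> carrier G"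
    have a: "ev G e t \<in> carrier G" using Iv.prems e by (auto intro: ev_carrier)
    have "(ev G e t \<otimes> e k = \<one>) = (e k = inv ev G e t)"
      using a e by (metis inv_comm inv_equality r_inv)
    then show "(\<exists>x\<in>carrier G. (e(m:=x)) m = ev G (e(m:=x)) t \<and> (e(m:=x)) m \<otimes> (e(m:=x)) k = \<one>) = (e k = ev G e (Iv t))"
      using f a by auto
  qed
qed

lemma fd_tm_in: assumes "tc t \<subseteq> carrier G" "definable G R D"
  shows "fd G R (\<lambda>e. ev G e t \<in> D)"
proof -
  define m where "m = Suc (Max (insert 0 (tv t)))"
  have f: "m \<notin> insert 0 (tv t)" unfolding m_def by (rule fresh) simp
  have "fd G R (\<lambda>e. e m = ev G e t \<and> e m \<in> D)"
    using assms f by (intro fd_conj fd_tm set_fd) auto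
  then have "fd G R (\<lambda>e. \<exists>x\<in>carrier G. (e(m:=x)) m = ev G (e(m:=x)) t \<and> (e(m:=x)) m \<in> D)"
    by (intro fd_ex)
  then show ?thesis
  proof (rule fd_cong)
    fix e :: "nat \<Rightarrow> 'a" assume e: "\<forall>i. e i \<in> carrier G"
    have a: "ev G e t \<in> carrier G" using assms e by (auto intro: ev_carrier)
    then show "(\<exists>x\<in>carrier G. (e(m:=x)) m = ev G (e(m:=x)) t \<and> (e(m:=x)) m \<in> D) = (ev G e t \<in> D)"
      using f by auto
  qed
qed

lemma def_tm: assumes "tc t \<subseteq> carrier G" "definable G R D" "tv t \<subseteq> {0}"
  shows "definable G R {x \<in> carrier G. ev G (\<lambda>_. x) t \<in> D}"
proof (rule fd_set[OF _ one_closed])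
  show "fd G R (\<lambda>e. ev G (\<lambda>_. e 0) t \<in> D)"
    using fd_tm_in[OF assms(1,2)] by (rule fd_cong) (metis assms(3) ev_cong singletonD subsetD)
qed

lemma def_int: assumes "definable G R A" "definable G R B" shows "definable G R (A \<inter> B)"
proof -
  have "A \<subseteq> carrier G" using assms(1) unfolding definable_def by auto
  then have "A \<inter> B = {x \<in> carrier G. x \<in> A \<and> x \<in> B}" by auto
  moreover have "definable G R {x \<in> carrier G. x \<in> A \<and> x \<in> B}"
    by (rule fd_set[OF _ one_closed]) (intro fd_conj set_fd assms)
  ultimately show ?thesis by simp
qed

lemma def_one: "definable G R {\<one>}"
proof -
  have "definable G R {x \<in> carrier G. x = \<one>}" by (rule fd_set[OF _ one_closed]) (rule fd_const, simp)
  moreover have "{x \<in> carrier G. x = \<one>} = {\<one>}" by auto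
  ultimately show ?thesis by simp
qed

definition nz :: "'a set \<Rightarrow> 'a set" where
  "nz D = {g \<in> carrier G. \<forall>x\<in>D. g \<otimes> x \<otimes> inv g \<in> D \<and> inv g \<otimes> x \<otimes> g \<in> D}"

lemma def_nz: assumes "definable G R D" shows "definable G R (nz D)"
proof -
  have Dc: "D \<subseteq> carrier G" using assms unfolding definable_def by auto
  define t1 :: "'a tm" where "t1 = Mt (Mt (V 0) (V 1)) (Iv (V 0))"
  define t2 :: "'a tm" where "t2 = Mt (Mt (Iv (V 0)) (V 1)) (V 0)"
  define P where "P = (\<lambda>e. \<not> (e (1::nat) \<in> D \<and> \<not> (ev G e t1 \<in> D \<and> ev G e t2 \<in> D)))"
  have "fd G R P"
    unfolding t1_def t2_def P_def
    by (intro fd_neg fd_conj set_fd fd_tm_in assms) auto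
  then have "fd G R (\<lambda>e. \<not> (\<exists>x\<in>carrier G. \<not> P (e(1:=x))))"
    by (intro fd_neg fd_ex)
  then have "fd G R (\<lambda>e. e 0 \<in> nz D)"
  proof (rule fd_cong)
    fix e :: "nat \<Rightarrow> 'a" assume e: "\<forall>i. e i \<in> carrier G"
    show "(\<not> (\<exists>x\<in>carrier G. \<not> P (e(1:=x)))) = (e 0 \<in> nz D)"
      using e Dc unfolding nz_def t1_def t2_def P_def by auto
  qed
  from fd_set[OF this one_closed] show ?thesis
    using nz_def by (simp add: nz_def)
qed

end



context group begin

lemma cancel_l[simp]: "x \<in> carrier G \<Longrightarrow> y \<in> carrier G \<Longrightarrow> inv x \<otimes> (x \<otimes> y) = y"
  by (simp add: m_assoc[symmetric])
lemma cancel_r[simp]: "x \<in> carrier G \<Longrightarrow> y \<in> carrier G \<Longrightarrow> x \<otimes> (inv x \<otimes> y) = y"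
  by (simp add: m_assoc[symmetric])

lemma rcos_eq: assumes "subgroup H G" "a \<in> carrier G" "b \<in> carrier G"
  shows "(H #> a = H #> b) \<longleftrightarrow> a \<otimes> inv b \<in> H"
proof
  assume "H #> a = H #> b"
  then have "a \<in> H #> b" using rcos_self[OF assms(2,1)] by simp
  then show "a \<otimes> inv b \<in> H" using subgroup.rcos_module[OF assms(1) is_group assms(3,2)] by simp
next
  assume "a \<otimes> inv b \<in> H"
  then have "a \<in> H #> b" using subgroup.rcos_module[OF assms(1) is_group assms(3,2)] by simp
  then show "H #> a = H #> b" using repr_independence[OF _ assms(3,1)] by simp
qed

lemma fi_transfer:
  assumes "subgroup K G" "H \<subseteq> carrier G" "finite (F ` H)"
    "\<And>h h'. h \<in> H \<Longrightarrow> h' \<in> H \<Longrightarrow> F h = F h' \<Longrightarrow> h \<otimes> inv h' \<in> K"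
  shows "finite {K #> h | h. h \<in> H}"
proof -
  define g where "g = (\<lambda>y. K #> (SOME h. h \<in> H \<and> F h = y))"
  have "{K #> h | h. h \<in> H} \<subseteq> g ` (F ` H)"
  proof
    fix C assume "C \<in> {K #> h | h. h \<in> H}"
    then obtain h where h: "h \<in> H" "C = K #> h" by blast
    define h0 where "h0 = (SOME h'. h' \<in> H \<and> F h' = F h)"
    have h0: "h0 \<in> H \<and> F h0 = F h" unfolding h0_def by (rule someI[of _ h]) (simp add: h)
    then have "K #> h0 = K #> h" using assms(4)[of h0 h] h assms(2)
      by (subst rcos_eq[OF assms(1)]) auto
    then show "C \<in> g ` (F ` H)" unfolding g_def using h h0_def by auto
  qed
  then show ?thesis using finite_subset assms(3) by blast
qed

lemma fi_refl: "subgroup H G \<Longrightarrow> fin_index G H H"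
proof -
  assume H: "subgroup H G"
  have "{H #> h | h. h \<in> H} \<subseteq> {H}" using subgroup.rcos_const[OF H is_group] by auto
  then show ?thesis unfolding fin_index_def using finite_subset by auto
qed

lemma fi_int: assumes "subgroup K G" "subgroup M G" "fin_index G K Q" "fin_index G M Q" "Q \<subseteq> carrier G"
  shows "fin_index G (K \<inter> M) Q"
proof -
  have "finite {(K \<inter> M) #> h | h. h \<in> Q}"
  proof (rule fi_transfer[where F = "\<lambda>h. (K #> h, M #> h)"])
    show "subgroup (K \<inter> M) G" using assms(1,2) by (rule subgroups_Inter_pair)
    have "(\<lambda>h. (K #> h, M #> h)) ` Q \<subseteq> {K #> h | h. h \<in> Q} \<times> {M #> h | h. h \<in> Q}" by auto
    then show "finite ((\<lambda>h. (K #> h, M #> h)) ` Q)" using assms(3,4) unfolding fin_index_def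
      by (meson finite_SigmaI finite_subset)
    fix h h' assume "h \<in> Q" "h' \<in> Q" "(K #> h, M #> h) = (K #> h', M #> h')"
    then have "h \<in> carrier G" "h' \<in> carrier G" "K #> h = K #> h'" "M #> h = M #> h'" using assms(5) by auto
    then show "h \<otimes> inv h' \<in> K \<inter> M" using rcos_eq[OF assms(1)] rcos_eq[OF assms(2)] by blast
  qed (use assms in auto)
  then show ?thesis using assms unfolding fin_index_def by auto
qed

lemma fi_restrict: assumes "subgroup K G" "subgroup L G" "fin_index G K H" "L \<subseteq> H"
  shows "fin_index G (K \<inter> L) L"
proof -
  have Lc: "L \<subseteq> carrier G" using assms(2) subgroup.subset by blast
  have "finite {(K \<inter> L) #> h | h. h \<in> L}"
  proof (rule fi_transfer[where F = "\<lambda>h. K #> h"])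
    show "subgroup (K \<inter> L) G" using assms by (intro subgroups_Inter_pair)
    show "finite ((\<lambda>h. K #> h) ` L)"
    proof (rule finite_subset)
      show "(\<lambda>h. K #> h) ` L \<subseteq> {K #> h | h. h \<in> H}" using assms by auto
      show "finite {K #> h | h. h \<in> H}" using assms(3) unfolding fin_index_def by simp
    qed
    fix h h' assume "h \<in> L" "h' \<in> L" "K #> h = K #> h'"
    moreover have "h \<otimes> inv h' \<in> L" using \<open>h \<in> L\<close> \<open>h' \<in> L\<close> assms(2)
      by (simp add: subgroup.m_closed subgroup.m_inv_closed)
    moreover have "h \<in> carrier G" "h' \<in> carrier G" using \<open>h \<in> L\<close> \<open>h' \<in> L\<close> Lc by auto
    ultimately show "h \<otimes> inv h' \<in> K \<inter> L" using rcos_eq[OF assms(1)] by blast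
  qed (use Lc in auto)
  then show ?thesis unfolding fin_index_def by auto
qed

lemma fi_super: assumes "subgroup K G" "subgroup L G" "fin_index G K H" "K \<subseteq> L" "L \<subseteq> H" "H \<subseteq> carrier G"
  shows "fin_index G L H"
proof -
  have "finite {L #> h | h. h \<in> H}"
  proof (rule fi_transfer[where F = "\<lambda>h. K #> h"])
    show "finite ((\<lambda>h. K #> h) ` H)"
    proof (rule finite_subset)
      show "(\<lambda>h. K #> h) ` H \<subseteq> {K #> h | h. h \<in> H}" using assms by auto
      show "finite {K #> h | h. h \<in> H}" using assms(3) unfolding fin_index_def by simp
    qed
    fix h h' assume "h \<in> H" "h' \<in> H" "K #> h = K #> h'"
    moreover have "h \<in> carrier G" "h' \<in> carrier G" using \<open>h \<in> H\<close> \<open>h' \<in> H\<close> assms(6) by auto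
    ultimately have "h \<otimes> inv h' \<in> K" using rcos_eq[OF assms(1)] by blast
    then show "h \<otimes> inv h' \<in> L" using assms(4) by blast
  qed (use assms in auto)
  then show ?thesis using assms unfolding fin_index_def by auto
qed

lemma fi_sub: "fin_index G K H \<Longrightarrow> K \<subseteq> L \<Longrightarrow> L \<subseteq> H \<Longrightarrow> fin_index G K L"
  unfolding fin_index_def by (rule conjI, simp) (erule conjE, erule finite_subset[rotated], blast)

lemma fi_trans: assumes "subgroup N G" "subgroup Q G" "fin_index G N Q" "fin_index G Q M" "M \<subseteq> carrier G"
  shows "fin_index G N M"
proof -
  define \<rho> where "\<rho> = (\<lambda>C. SOME y. y \<in> M \<and> C = Q #> y)"
  have \<rho>: "\<rho> (Q #> m) \<in> M \<and> Q #> m = Q #> \<rho> (Q #> m)" if "m \<in> M" for m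
    unfolding \<rho>_def by (rule someI[of _ m]) (simp add: that)
  have Qc: "Q \<subseteq> carrier G" using assms(2) subgroup.subset by blast
  have inQ: "m \<otimes> inv (\<rho> (Q #> m)) \<in> Q" if "m \<in> M" for m
  proof -
    have "m \<in> carrier G" "\<rho> (Q #> m) \<in> carrier G" using \<rho>[OF that] that assms(5) by auto
    then show ?thesis using \<rho>[OF that] rcos_eq[OF assms(2)] by simp
  qed
  have "finite {N #> h | h. h \<in> M}"
  proof (rule fi_transfer[where F = "\<lambda>m. (Q #> m, N #> (m \<otimes> inv (\<rho> (Q #> m))))"])
    have "(\<lambda>m. (Q #> m, N #> (m \<otimes> inv (\<rho> (Q #> m))))) ` M \<subseteq> {Q #> h | h. h \<in> M} \<times> {N #> h | h. h \<in> Q}"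
    proof (rule image_subsetI)
      fix m assume "m \<in> M" then show "(Q #> m, N #> (m \<otimes> inv (\<rho> (Q #> m)))) \<in> {Q #> h | h. h \<in> M} \<times> {N #> h | h. h \<in> Q}"
        using inQ by blast
    qed
    then show "finite ((\<lambda>m. (Q #> m, N #> (m \<otimes> inv (\<rho> (Q #> m))))) ` M)"
      using assms(3,4) unfolding fin_index_def by (meson finite_SigmaI finite_subset)
    fix h h' assume hh: "h \<in> M" "h' \<in> M" "(Q #> h, N #> (h \<otimes> inv (\<rho> (Q #> h)))) = (Q #> h', N #> (h' \<otimes> inv (\<rho> (Q #> h'))))"
    define r where "r = \<rho> (Q #> h)"
    have r: "r \<in> carrier G" using \<rho>[OF hh(1)] assms(5) r_def by auto
    have e1: "Q #> h = Q #> h'" using hh(3) by simp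
    have e2: "N #> (h \<otimes> inv (\<rho> (Q #> h))) = N #> (h' \<otimes> inv (\<rho> (Q #> h')))" by (rule conjunct2[OF hh(3)[unfolded prod.inject]])
    have "N #> (h \<otimes> inv r) = N #> (h' \<otimes> inv r)" using e2 unfolding r_def e1 .
    moreover have "h \<in> carrier G" "h' \<in> carrier G" using hh assms(5) by auto
    ultimately have "(h \<otimes> inv r) \<otimes> inv (h' \<otimes> inv r) \<in> N" using rcos_eq[OF assms(1)] r by simp
    moreover have "(h \<otimes> inv r) \<otimes> inv (h' \<otimes> inv r) = h \<otimes> inv h'"
    proof -
      have "h \<in> carrier G" "h' \<in> carrier G" using hh assms(5) by auto
      then show ?thesis using r by (simp add: inv_mult_group m_assoc)
    qed
    ultimately show "h \<otimes> inv h' \<in> N" by simp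
  qed (use assms in auto)
  moreover have "N \<subseteq> M" using assms(3,4) unfolding fin_index_def by auto
  ultimately show ?thesis unfolding fin_index_def by auto
qed

lemma normalizer_eq: assumes "Q \<subseteq> carrier G" shows "normalizer G Q = nz Q"
proof -
  have "g <# Q #> inv g = Q \<longleftrightarrow> (\<forall>x\<in>Q. g \<otimes> x \<otimes> inv g \<in> Q \<and> inv g \<otimes> x \<otimes> g \<in> Q)"
    if g: "g \<in> carrier G" for g
  proof
    assume e: "g <# Q #> inv g = Q"
    have m: "g \<otimes> x \<otimes> inv g \<in> g <# Q #> inv g" if "x \<in> Q" for x
      using that unfolding l_coset_def r_coset_def by auto
    show "\<forall>x\<in>Q. g \<otimes> x \<otimes> inv g \<in> Q \<and> inv g \<otimes> x \<otimes> g \<in> Q"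
    proof
      fix x assume x: "x \<in> Q"
      have "g \<otimes> x \<otimes> inv g \<in> Q" using m[OF x] e by simp
      moreover have "x \<in> g <# Q #> inv g" using x e by simp
      then obtain y where "y \<in> Q" "x = g \<otimes> y \<otimes> inv g" unfolding l_coset_def r_coset_def by auto
      then have "inv g \<otimes> x \<otimes> g \<in> Q" using g assms by (auto simp: m_assoc)
      ultimately show "g \<otimes> x \<otimes> inv g \<in> Q \<and> inv g \<otimes> x \<otimes> g \<in> Q" by simp
    qed
  next
    assume a: "\<forall>x\<in>Q. g \<otimes> x \<otimes> inv g \<in> Q \<and> inv g \<otimes> x \<otimes> g \<in> Q"
    show "g <# Q #> inv g = Q"
    proof
      show "g <# Q #> inv g \<subseteq> Q" using a unfolding l_coset_def r_coset_def by auto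
      show "Q \<subseteq> g <# Q #> inv g"
      proof
        fix x assume x: "x \<in> Q"
        then have "inv g \<otimes> x \<otimes> g \<in> Q" using a by simp
        moreover have "x = g \<otimes> (inv g \<otimes> x \<otimes> g) \<otimes> inv g" using x g assms by (auto simp: m_assoc)
        ultimately show "x \<in> g <# Q #> inv g" unfolding l_coset_def r_coset_def by auto
      qed
    qed
  qed
  then show ?thesis unfolding normalizer_def stabilizer_def nz_def using assms by auto
qed

end



context group begin

definition cj :: "'a \<Rightarrow> 'a set \<Rightarrow> 'a set" where
  "cj w K = {x \<in> carrier G. w \<otimes> x \<otimes> inv w \<in> K}"

lemma cj_definable: assumes "definable G R K" "w \<in> carrier G" shows "definable G R (cj w K)"
proof -
  have "definable G R {x \<in> carrier G. ev G (\<lambda>_. x) (Mt (Mt (Cn w) (V 0)) (Iv (Cn w))) \<in> K}"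
    using assms by (intro def_tm) auto
  then show ?thesis unfolding cj_def by simp
qed

lemma cj_subgroup: assumes "subgroup K G" "w \<in> carrier G" shows "subgroup (cj w K) G"
proof (rule subgroupI)
  show "cj w K \<subseteq> carrier G" unfolding cj_def by auto
  have "\<one> \<in> cj w K" using assms unfolding cj_def by (simp add: subgroup.one_closed)
  then show "cj w K \<noteq> {}" by auto
next
  fix a assume a: "a \<in> cj w K"
  then have ac: "a \<in> carrier G" "w \<otimes> a \<otimes> inv w \<in> K" unfolding cj_def by auto
  have "inv (w \<otimes> a \<otimes> inv w) = w \<otimes> inv a \<otimes> inv w" using ac assms(2) by (simp add: inv_mult_group m_assoc)
  then show "inv a \<in> cj w K" using subgroup.m_inv_closed[OF assms(1) ac(2)] ac unfolding cj_def by simp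
next
  fix a b assume "a \<in> cj w K" "b \<in> cj w K"
  then have ac: "a \<in> carrier G" "w \<otimes> a \<otimes> inv w \<in> K" "b \<in> carrier G" "w \<otimes> b \<otimes> inv w \<in> K" unfolding cj_def by auto
  have "(w \<otimes> a \<otimes> inv w) \<otimes> (w \<otimes> b \<otimes> inv w) = w \<otimes> (a \<otimes> b) \<otimes> inv w" using ac assms(2) by (simp add: m_assoc)
  then show "a \<otimes> b \<in> cj w K" using subgroup.m_closed[OF assms(1) ac(2) ac(4)] ac unfolding cj_def by simp
qed

lemma conjfin:
  assumes "subgroup Q G" "subgroup K0 G" "fin_index G K0 P" "w \<in> carrier G" "P \<subseteq> carrier G"
    "\<forall>q\<in>Q. w \<otimes> q \<otimes> inv w \<in> P"
  shows "fin_index G (Q \<inter> cj w K0) Q"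
proof -
  have Qc: "Q \<subseteq> carrier G" using assms(1) subgroup.subset by blast
  have "finite {(Q \<inter> cj w K0) #> h | h. h \<in> Q}"
  proof (rule fi_transfer[where F = "\<lambda>q. K0 #> (w \<otimes> q \<otimes> inv w)"])
    show "subgroup (Q \<inter> cj w K0) G" using assms(1) cj_subgroup[OF assms(2,4)] by (rule subgroups_Inter_pair)
    show "Q \<subseteq> carrier G" by (rule Qc)
    show "finite ((\<lambda>q. K0 #> (w \<otimes> q \<otimes> inv w)) ` Q)"
    proof (rule finite_subset)
      show "(\<lambda>q. K0 #> (w \<otimes> q \<otimes> inv w)) ` Q \<subseteq> {K0 #> h | h. h \<in> P}" using assms(6) by blast
      show "finite {K0 #> h | h. h \<in> P}" using assms(3) unfolding fin_index_def by simp
    qed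
    fix h h' assume hh: "h \<in> Q" "h' \<in> Q" "K0 #> (w \<otimes> h \<otimes> inv w) = K0 #> (w \<otimes> h' \<otimes> inv w)"
    have c: "h \<in> carrier G" "h' \<in> carrier G" using hh Qc by auto
    then have "(w \<otimes> h \<otimes> inv w) \<otimes> inv (w \<otimes> h' \<otimes> inv w) \<in> K0"
      using hh(3) rcos_eq[OF assms(2)] assms(4) by simp
    moreover have "(w \<otimes> h \<otimes> inv w) \<otimes> inv (w \<otimes> h' \<otimes> inv w) = w \<otimes> (h \<otimes> inv h') \<otimes> inv w"
      using c assms(4) by (simp add: inv_mult_group m_assoc)
    ultimately have "h \<otimes> inv h' \<in> cj w K0" unfolding cj_def using c by simp
    moreover have "h \<otimes> inv h' \<in> Q" using hh assms(1) by (simp add: subgroup.m_closed subgroup.m_inv_closed)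
    ultimately show "h \<otimes> inv h' \<in> Q \<inter> cj w K0" by simp
  qed
  then show ?thesis unfolding fin_index_def by auto
qed

lemma lcs_props: "subgroup H G \<Longrightarrow> subgroup (lcs G H n) G \<and> lcs G H n \<subseteq> H"
proof (induction n)
  case 0 then show ?case by simp
next
  case (Suc n)
  let ?S = "{x \<otimes> y \<otimes> inv x \<otimes> inv y | x y. x \<in> lcs G H n \<and> y \<in> H}"
  have Hc: "H \<subseteq> carrier G" using Suc.prems subgroup.subset by blast
  have "?S \<subseteq> H" using Suc Hc by (auto intro!: subgroup.m_closed subgroup.m_inv_closed)
  moreover have "?S \<subseteq> carrier G" using calculation Hc by blast
  ultimately show ?case using generate_is_subgroup generate_subgroup_incl Suc.prems by simp
qed

lemma lcs_comm: "x \<in> lcs G H n \<Longrightarrow> y \<in> H \<Longrightarrow> x \<otimes> y \<otimes> inv x \<otimes> inv y \<in> lcs G H (Suc n)"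
  by (auto intro: generate.incl)

lemma lcs_mono: "A \<subseteq> B \<Longrightarrow> lcs G A n \<subseteq> lcs G B n"
proof (induction n)
  case (Suc n)
  then show ?case by (simp, intro mono_generate) blast
qed simp

lemma comm_conj: assumes "g \<in> carrier G" "x \<in> carrier G" "y \<in> carrier G"
  shows "g \<otimes> (x \<otimes> y \<otimes> inv x \<otimes> inv y) \<otimes> inv g =
   (g \<otimes> x \<otimes> inv g) \<otimes> (g \<otimes> y \<otimes> inv g) \<otimes> inv (g \<otimes> x \<otimes> inv g) \<otimes> inv (g \<otimes> y \<otimes> inv g)"
  using assms by (simp add: inv_mult_group m_assoc)

lemma gen_conj: assumes "S \<subseteq> carrier G" "g \<in> carrier G" "\<And>s. s \<in> S \<Longrightarrow> g \<otimes> s \<otimes> inv g \<in> S"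
  and "z \<in> generate G S" shows "g \<otimes> z \<otimes> inv g \<in> generate G S"
  using assms(4)
proof induction
  case one then show ?case using assms(2) by (simp add: generate.one)
next
  case (incl h) then show ?case using assms(3) by (simp add: generate.incl)
next
  case (inv h)
  have "g \<otimes> inv h \<otimes> inv g = inv (g \<otimes> h \<otimes> inv g)" using inv assms by (auto simp: inv_mult_group m_assoc)
  then show ?case using assms(3)[OF inv] by (simp add: generate.inv)
next
  case (eng h1 h2)
  have c: "h1 \<in> carrier G" "h2 \<in> carrier G" using eng.hyps generate_in_carrier assms(1) by auto
  have "g \<otimes> (h1 \<otimes> h2) \<otimes> inv g = (g \<otimes> h1 \<otimes> inv g) \<otimes> (g \<otimes> h2 \<otimes> inv g)"
    using c assms(2) by (simp add: m_assoc)
  then show ?case using eng.IH by (simp add: generate.eng)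
qed

lemma lcs_norm: "subgroup H G \<Longrightarrow> g \<in> H \<Longrightarrow> x \<in> lcs G H n \<Longrightarrow> g \<otimes> x \<otimes> inv g \<in> lcs G H n"
proof (induction n arbitrary: x)
  case 0 then show ?case by (simp add: subgroup.m_closed subgroup.m_inv_closed)
next
  case (Suc n)
  let ?S = "{x \<otimes> y \<otimes> inv x \<otimes> inv y | x y. x \<in> lcs G H n \<and> y \<in> H}"
  have Hc: "H \<subseteq> carrier G" using Suc.prems subgroup.subset by blast
  have Lc: "lcs G H n \<subseteq> carrier G" using lcs_props[OF Suc.prems(1)] Hc by blast
  have gc: "g \<in> carrier G" using Suc.prems Hc by auto
  have Sc: "?S \<subseteq> carrier G" using Hc Lc by blast
  have "g \<otimes> s \<otimes> inv g \<in> ?S" if sS: "s \<in> ?S" for s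
  proof -
    obtain x y where xy: "s = x \<otimes> y \<otimes> inv x \<otimes> inv y" "x \<in> lcs G H n" "y \<in> H" using sS by blast
    have "g \<otimes> x \<otimes> inv g \<in> lcs G H n" using Suc xy by blast
    moreover have "g \<otimes> y \<otimes> inv g \<in> H" using Suc.prems xy by (simp add: subgroup.m_closed subgroup.m_inv_closed)
    moreover have "g \<otimes> s \<otimes> inv g = (g \<otimes> x \<otimes> inv g) \<otimes> (g \<otimes> y \<otimes> inv g) \<otimes> inv (g \<otimes> x \<otimes> inv g) \<otimes> inv (g \<otimes> y \<otimes> inv g)"
      unfolding xy(1) using comm_conj gc xy Hc Lc by blast
    ultimately show ?thesis by blast
  qed
  then show ?case using gen_conj[OF Sc gc] Suc.prems(3) by simp
qed

lemma lcs_one: "subgroup H G \<Longrightarrow> \<one> \<in> lcs G H n"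
  using lcs_props subgroup.one_closed by blast

end



locale dccg = group +
  fixes R :: "'r \<Rightarrow> 'a list set"
  assumes dcc: "dcc G R"
begin

lemma dcc_min: assumes "F \<noteq> {}" "\<forall>K\<in>F. def_subgroup G R K" shows "\<exists>M\<in>F. \<forall>K\<in>F. \<not> K \<subset> M"
proof (rule ccontr)
  assume "\<not> (\<exists>M\<in>F. \<forall>K\<in>F. \<not> K \<subset> M)"
  then have "\<forall>M\<in>F. \<exists>K. K \<in> F \<and> K \<subset> M" by blast
  then obtain h where h: "\<forall>M\<in>F. h M \<in> F \<and> h M \<subset> M" by metis
  obtain M0 where M0: "M0 \<in> F" using assms(1) by blast
  define f where "f n = (h ^^ n) M0" for n
  have fF: "f n \<in> F" for n by (induction n) (use M0 h in \<open>auto simp: f_def\<close>)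
  have "\<forall>n. def_subgroup G R (f n) \<and> f (Suc n) \<subset> f n"
    using fF h assms(2) by (simp add: f_def)
  then show False using dcc unfolding dcc_def by blast
qed

lemma ds_int: "def_subgroup G R A \<Longrightarrow> def_subgroup G R B \<Longrightarrow> def_subgroup G R (A \<inter> B)"
  unfolding def_subgroup_def using subgroups_Inter_pair def_int by blast

lemma ds_carrier: "def_subgroup G R (carrier G)"
proof -
  have "definable G R {x \<in> carrier G. x = x}" by (rule fd_set[OF fd_eq one_closed], rule one_closed)
  then show ?thesis unfolding def_subgroup_def using subgroup_self by simp
qed

lemma ds_one: "def_subgroup G R {\<one>}"
  unfolding def_subgroup_def using triv_subgroup def_one by simp

definition dhull :: "'a set \<Rightarrow> 'a set" where
  "dhull S0 = (SOME D. def_subgroup G R D \<and> S0 \<subseteq> D \<and> (\<forall>D'. def_subgroup G R D' \<and> S0 \<subseteq> D' \<longrightarrow> D \<subseteq> D'))"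

lemma hull_ex: assumes "S0 \<subseteq> carrier G"
  shows "\<exists>D. def_subgroup G R D \<and> S0 \<subseteq> D \<and> (\<forall>D'. def_subgroup G R D' \<and> S0 \<subseteq> D' \<longrightarrow> D \<subseteq> D')"
proof -
  let ?F = "{D. def_subgroup G R D \<and> S0 \<subseteq> D}"
  have "carrier G \<in> ?F" using ds_carrier assms by simp
  then obtain M where M: "M \<in> ?F" "\<forall>K\<in>?F. \<not> K \<subset> M" using dcc_min[of ?F] by blast
  have "M \<subseteq> D'" if "def_subgroup G R D'" "S0 \<subseteq> D'" for D'
  proof -
    have "M \<inter> D' \<in> ?F" using M(1) that ds_int by auto
    then have "\<not> M \<inter> D' \<subset> M" using M(2) by blast
    then show ?thesis by blast
  qed
  then show ?thesis using M(1) by blast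
qed

lemma dhull: assumes "S0 \<subseteq> carrier G"
  shows "def_subgroup G R (dhull S0)" "S0 \<subseteq> dhull S0" "\<And>D'. def_subgroup G R D' \<Longrightarrow> S0 \<subseteq> D' \<Longrightarrow> dhull S0 \<subseteq> D'"
proof -
  have H: "def_subgroup G R (dhull S0) \<and> S0 \<subseteq> dhull S0 \<and> (\<forall>D'. def_subgroup G R D' \<and> S0 \<subseteq> D' \<longrightarrow> dhull S0 \<subseteq> D')"
    unfolding dhull_def by (rule someI_ex[OF hull_ex[OF assms]])
  then show "def_subgroup G R (dhull S0)" "S0 \<subseteq> dhull S0" by blast+
  fix D' assume "def_subgroup G R D'" "S0 \<subseteq> D'" then show "dhull S0 \<subseteq> D'" using H by blast
qed

lemma cc: assumes "def_subgroup G R Q"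
  shows "def_subgroup G R (conn_comp G R Q)" "fin_index G (conn_comp G R Q) Q"
proof -
  let ?F = "{K. def_subgroup G R K \<and> fin_index G K Q}"
  have Q: "subgroup Q G" using assms unfolding def_subgroup_def by simp
  have Qc: "Q \<subseteq> carrier G" using Q subgroup.subset by blast
  have "Q \<in> ?F" using assms fi_refl Q by simp
  then obtain M where M: "M \<in> ?F" "\<forall>K\<in>?F. \<not> K \<subset> M" using dcc_min[of ?F] by blast
  have "M \<subseteq> K" if "K \<in> ?F" for K
  proof -
    have "M \<inter> K \<in> ?F" using M(1) that ds_int fi_int Qc unfolding def_subgroup_def by auto
    then have "\<not> M \<inter> K \<subset> M" using M(2) by blast
    then show ?thesis by blast
  qed
  then have "conn_comp G R Q = M" unfolding conn_comp_def using M(1) by blast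
  then show "def_subgroup G R (conn_comp G R Q)" "fin_index G (conn_comp G R Q) Q" using M(1) by auto
qed

lemma cc_le: "def_subgroup G R K \<Longrightarrow> fin_index G K Q \<Longrightarrow> conn_comp G R Q \<subseteq> K"
  unfolding conn_comp_def by blast

lemma ds_sub: "def_subgroup G R K \<Longrightarrow> subgroup K G" unfolding def_subgroup_def by simp
lemma ds_carr: "def_subgroup G R K \<Longrightarrow> K \<subseteq> carrier G" unfolding def_subgroup_def using subgroup.subset by blast

lemma nz_ds: assumes "def_subgroup G R D" shows "def_subgroup G R (nz D)"
  using def_nz[of R D] normalizer_imp_subgroup[of D] normalizer_eq[of D] assms
  unfolding def_subgroup_def using subgroup.subset by metis

lemma SL: assumes "def_subgroup G R Q" "conn_comp G R Q = Q" "fin_index G Q (normalizer G Q)"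
    "w \<in> carrier G" "\<forall>q\<in>Q. w \<otimes> q \<otimes> inv w \<in> normalizer G Q"
  shows "\<forall>q\<in>Q. w \<otimes> q \<otimes> inv w \<in> Q"
proof -
  have Q: "subgroup Q G" and Qc: "Q \<subseteq> carrier G" using assms(1) ds_sub ds_carr by auto
  have Mc: "normalizer G Q \<subseteq> carrier G" using normalizer_imp_subgroup[OF Qc] subgroup.subset by blast
  have "fin_index G (Q \<inter> cj w Q) Q" by (rule conjfin[OF Q Q assms(3) assms(4) Mc assms(5)])
  moreover have "def_subgroup G R (cj w Q)"
    using assms(1,4) cj_definable cj_subgroup unfolding def_subgroup_def by blast
  then have "def_subgroup G R (Q \<inter> cj w Q)" using assms(1) ds_int by blast
  ultimately have "conn_comp G R Q \<subseteq> Q \<inter> cj w Q" by (rule cc_le[rotated])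
  then show ?thesis using assms(2) unfolding cj_def by auto
qed

end



context group begin

abbreviation cm :: "'a \<Rightarrow> 'a \<Rightarrow> 'a" where "cm x y \<equiv> x \<otimes> y \<otimes> inv x \<otimes> inv y"

lemma id1: "x \<in> carrier G \<Longrightarrow> x' \<in> carrier G \<Longrightarrow> b \<in> carrier G \<Longrightarrow>
  cm (x \<otimes> x') b = (x \<otimes> cm x' b \<otimes> inv x) \<otimes> cm x b"
  by (simp add: inv_mult_group m_assoc)
lemma id2: "x \<in> carrier G \<Longrightarrow> b \<in> carrier G \<Longrightarrow>
  cm (inv x) b = inv x \<otimes> inv (cm x b) \<otimes> x"
  by (simp add: inv_mult_group m_assoc)
lemma id3: "x \<in> carrier G \<Longrightarrow> y \<in> carrier G \<Longrightarrow> y' \<in> carrier G \<Longrightarrow>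
  cm x (y \<otimes> y') = cm x y \<otimes> (y \<otimes> cm x y' \<otimes> inv y)"
  by (simp add: inv_mult_group m_assoc)
lemma id4: "x \<in> carrier G \<Longrightarrow> y \<in> carrier G \<Longrightarrow>
  cm x (inv y) = inv y \<otimes> inv (cm x y) \<otimes> y"
  by (simp add: inv_mult_group m_assoc)

lemma Lsub: assumes D: "subgroup D G" and N: "subgroup N G"
  and nn: "\<And>g d. g \<in> N \<Longrightarrow> d \<in> D \<Longrightarrow> g \<otimes> d \<otimes> inv g \<in> D \<and> inv g \<otimes> d \<otimes> g \<in> D"
  and b: "b \<in> carrier G"
  shows "subgroup {x \<in> N. cm x b \<in> D} G"
proof (rule subgroupI)
  have Nc: "N \<subseteq> carrier G" using N subgroup.subset by blast
  show "{x \<in> N. cm x b \<in> D} \<subseteq> carrier G" using Nc by blast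
  have "\<one> \<in> {x \<in> N. cm x b \<in> D}" using N D b by (simp add: subgroup.one_closed)
  then show "{x \<in> N. cm x b \<in> D} \<noteq> {}" by blast
next
  fix a assume a: "a \<in> {x \<in> N. cm x b \<in> D}"
  then have ac: "a \<in> carrier G" using N subgroup.subset by blast
  have "inv a \<otimes> inv (cm a b) \<otimes> a \<in> D" using nn[of a "inv (cm a b)"] a D by (simp add: subgroup.m_inv_closed)
  then show "inv a \<in> {x \<in> N. cm x b \<in> D}" using id2[OF ac b] a N by (simp add: subgroup.m_inv_closed)
next
  fix a a' assume a: "a \<in> {x \<in> N. cm x b \<in> D}" "a' \<in> {x \<in> N. cm x b \<in> D}"
  then have ac: "a \<in> carrier G" "a' \<in> carrier G" using N subgroup.subset by blast+
  have "(a \<otimes> cm a' b \<otimes> inv a) \<otimes> cm a b \<in> D" using nn[of a "cm a' b"] a D by (simp add: subgroup.m_closed)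
  then show "a \<otimes> a' \<in> {x \<in> N. cm x b \<in> D}" using id1[OF ac b] a N by (simp add: subgroup.m_closed)
qed

lemma Rsub: assumes D: "subgroup D G" and N: "subgroup N G"
  and nn: "\<And>g d. g \<in> N \<Longrightarrow> d \<in> D \<Longrightarrow> g \<otimes> d \<otimes> inv g \<in> D \<and> inv g \<otimes> d \<otimes> g \<in> D"
  and x: "x \<in> carrier G"
  shows "subgroup {y \<in> N. cm x y \<in> D} G"
proof (rule subgroupI)
  have Nc: "N \<subseteq> carrier G" using N subgroup.subset by blast
  show "{y \<in> N. cm x y \<in> D} \<subseteq> carrier G" using Nc by blast
  have "\<one> \<in> {y \<in> N. cm x y \<in> D}" using N D x by (simp add: subgroup.one_closed)
  then show "{y \<in> N. cm x y \<in> D} \<noteq> {}" by blast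
next
  fix a assume a: "a \<in> {y \<in> N. cm x y \<in> D}"
  then have ac: "a \<in> carrier G" using N subgroup.subset by blast
  have "inv a \<otimes> inv (cm x a) \<otimes> a \<in> D" using nn[of a "inv (cm x a)"] a D by (simp add: subgroup.m_inv_closed)
  then show "inv a \<in> {y \<in> N. cm x y \<in> D}" using id4[OF x ac] a N by (simp add: subgroup.m_inv_closed)
next
  fix a a' assume a: "a \<in> {y \<in> N. cm x y \<in> D}" "a' \<in> {y \<in> N. cm x y \<in> D}"
  then have ac: "a \<in> carrier G" "a' \<in> carrier G" using N subgroup.subset by blast+
  have "cm x a \<otimes> (a \<otimes> cm x a' \<otimes> inv a) \<in> D" using nn[of a "cm x a'"] a D by (simp add: subgroup.m_closed)
  then show "a \<otimes> a' \<in> {y \<in> N. cm x y \<in> D}" using id3[OF x ac] a N by (simp add: subgroup.m_closed)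
qed

end

context dccg begin

lemma conj_in_hull: assumes "subgroup C G" "g \<in> carrier G" "\<forall>c\<in>C. g \<otimes> c \<otimes> inv g \<in> C"
  shows "\<forall>x\<in>dhull C. g \<otimes> x \<otimes> inv g \<in> dhull C"
proof -
  have Cc: "C \<subseteq> carrier G" using assms(1) subgroup.subset by blast
  note H = dhull[OF Cc]
  have "def_subgroup G R (cj g (dhull C))"
    using H(1) assms(2) cj_definable cj_subgroup unfolding def_subgroup_def by blast
  then have "def_subgroup G R (dhull C \<inter> cj g (dhull C))" using H(1) ds_int by blast
  moreover have "C \<subseteq> dhull C \<inter> cj g (dhull C)" using H(2) assms(3) Cc unfolding cj_def by auto
  ultimately have "dhull C \<subseteq> dhull C \<inter> cj g (dhull C)" using H(3) by blast
  then show ?thesis unfolding cj_def by blast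
qed

lemma norm_hull: assumes "subgroup C G" "g \<in> carrier G"
  "\<forall>c\<in>C. g \<otimes> c \<otimes> inv g \<in> C" "\<forall>c\<in>C. inv g \<otimes> c \<otimes> g \<in> C"
  shows "g \<in> nz (dhull C)"
proof -
  have "\<forall>x\<in>dhull C. g \<otimes> x \<otimes> inv g \<in> dhull C" using conj_in_hull assms(1-3) by blast
  moreover have "\<forall>x\<in>dhull C. inv g \<otimes> x \<otimes> inv (inv g) \<in> dhull C"
    using conj_in_hull[OF assms(1), of "inv g"] assms(2,4) by simp
  ultimately show ?thesis using assms(2) unfolding nz_def by simp
qed

lemma lemmaC:
  assumes A: "subgroup A G" and B: "subgroup B G" and C: "subgroup C G"
    and comm: "\<And>a b. a \<in> A \<Longrightarrow> b \<in> B \<Longrightarrow> cm a b \<in> C"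
    and nA: "\<And>g c. g \<in> A \<Longrightarrow> c \<in> C \<Longrightarrow> g \<otimes> c \<otimes> inv g \<in> C"
    and nB: "\<And>g c. g \<in> B \<Longrightarrow> c \<in> C \<Longrightarrow> g \<otimes> c \<otimes> inv g \<in> C"
    and x: "x \<in> dhull A" and y: "y \<in> dhull B"
  shows "cm x y \<in> dhull C"
proof -
  have Ac: "A \<subseteq> carrier G" using A subgroup.subset by blast
  have Bc: "B \<subseteq> carrier G" using B subgroup.subset by blast
  have Cc: "C \<subseteq> carrier G" using C subgroup.subset by blast
  define D where "D = dhull C"
  define N where "N = nz D"
  have Dd: "def_subgroup G R D" "C \<subseteq> D" using dhull[OF Cc] D_def by auto
  have Nd: "def_subgroup G R N" using nz_ds[OF Dd(1)] N_def by simp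
  have Ds: "subgroup D G" and Ns: "subgroup N G" using Dd Nd ds_sub by auto
  have nn: "g \<otimes> d \<otimes> inv g \<in> D \<and> inv g \<otimes> d \<otimes> g \<in> D" if "g \<in> N" "d \<in> D" for g d
    using that unfolding N_def nz_def by auto
  have AN: "A \<subseteq> N"
  proof
    fix a assume a: "a \<in> A"
    have "inv a \<in> A" using a A by (simp add: subgroup.m_inv_closed)
    then have "\<forall>c\<in>C. inv a \<otimes> c \<otimes> a \<in> C" using nA[of "inv a"] a Ac by auto
    then show "a \<in> N" unfolding N_def D_def using norm_hull[OF C] a Ac nA by blast
  qed
  have BN: "B \<subseteq> N"
  proof
    fix a assume a: "a \<in> B"
    have "inv a \<in> B" using a B by (simp add: subgroup.m_inv_closed)
    then have "\<forall>c\<in>C. inv a \<otimes> c \<otimes> a \<in> C" using nB[of "inv a"] a Bc by auto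
    then show "a \<in> N" unfolding N_def D_def using norm_hull[OF C] a Bc nB by blast
  qed
  have step2: "dhull A \<subseteq> {x \<in> N. cm x b \<in> D}" if b: "b \<in> B" for b
  proof -
    have bc: "b \<in> carrier G" using b Bc by blast
    have "definable G R {x \<in> carrier G. ev G (\<lambda>_. x) (Mt (Mt (Mt (V 0) (Cn b)) (Iv (V 0))) (Iv (Cn b))) \<in> D}"
      using bc Dd(1) unfolding def_subgroup_def by (intro def_tm) auto
    then have "definable G R {x \<in> carrier G. cm x b \<in> D}" by simp
    then have "definable G R (N \<inter> {x \<in> carrier G. cm x b \<in> D})" using Nd def_int unfolding def_subgroup_def by blast
    moreover have "N \<inter> {x \<in> carrier G. cm x b \<in> D} = {x \<in> N. cm x b \<in> D}" using Ns subgroup.subset by blast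
    ultimately have "def_subgroup G R {x \<in> N. cm x b \<in> D}" using Lsub[OF Ds Ns nn bc] unfolding def_subgroup_def by simp
    moreover have "A \<subseteq> {x \<in> N. cm x b \<in> D}" using AN comm b Dd(2) by blast
    ultimately show ?thesis using dhull(3)[OF Ac] by blast
  qed
  have step3: "dhull B \<subseteq> {y \<in> N. cm x y \<in> D}" if x: "x \<in> dhull A" for x
  proof -
    have xc: "x \<in> carrier G" using x dhull(1)[OF Ac] ds_carr by blast
    have "definable G R {y \<in> carrier G. ev G (\<lambda>_. y) (Mt (Mt (Mt (Cn x) (V 0)) (Iv (Cn x))) (Iv (V 0))) \<in> D}"
      using xc Dd(1) unfolding def_subgroup_def by (intro def_tm) auto
    then have "definable G R {y \<in> carrier G. cm x y \<in> D}" by simp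
    then have "definable G R (N \<inter> {y \<in> carrier G. cm x y \<in> D})" using Nd def_int unfolding def_subgroup_def by blast
    moreover have "N \<inter> {y \<in> carrier G. cm x y \<in> D} = {y \<in> N. cm x y \<in> D}" using Ns subgroup.subset by blast
    ultimately have "def_subgroup G R {y \<in> N. cm x y \<in> D}" using Rsub[OF Ds Ns nn xc] unfolding def_subgroup_def by simp
    moreover have "B \<subseteq> {y \<in> N. cm x y \<in> D}" using BN step2 x by blast
    ultimately show ?thesis using dhull(3)[OF Bc] by blast
  qed
  show ?thesis using step3[OF x] y D_def by blast
qed

end



context dccg begin

lemma hull_nil: assumes "nilpotent_subgroup G H" shows "nilpotent_subgroup G (dhull H)"
proof -
  have H: "subgroup H G" using assms unfolding nilpotent_subgroup_def by simp
  have Hc: "H \<subseteq> carrier G" using H subgroup.subset by blast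
  have dH: "def_subgroup G R (dhull H)" "H \<subseteq> dhull H" using dhull[OF Hc] by auto
  have dHs: "subgroup (dhull H) G" using dH ds_sub by blast
  have key: "lcs G (dhull H) n \<subseteq> dhull (lcs G H n)" for n
  proof (induction n)
    case 0 then show ?case by simp
  next
    case (Suc n)
    have Ln: "subgroup (lcs G H n) G" "lcs G H n \<subseteq> H" using lcs_props[OF H, of n] lcs_props[OF H, of "Suc n"] by blast+
    have Ls: "subgroup (lcs G H (Suc n)) G" "lcs G H (Suc n) \<subseteq> H" using lcs_props[OF H, of n] lcs_props[OF H, of "Suc n"] by blast+
    have LSc: "lcs G H (Suc n) \<subseteq> carrier G" using Ls Hc by blast
    have T: "def_subgroup G R (dhull (lcs G H (Suc n)))" using dhull(1)[OF LSc] .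
    let ?S = "{x \<otimes> y \<otimes> inv x \<otimes> inv y | x y. x \<in> lcs G (dhull H) n \<and> y \<in> dhull H}"
    have "?S \<subseteq> dhull (lcs G H (Suc n))"
    proof
      fix s assume "s \<in> ?S"
      then obtain x y where xy: "s = cm x y" "x \<in> lcs G (dhull H) n" "y \<in> dhull H" by blast
      have x: "x \<in> dhull (lcs G H n)" using xy Suc by blast
      show "s \<in> dhull (lcs G H (Suc n))" unfolding xy(1)
      proof (rule lemmaC[OF Ln(1) H Ls(1) _ _ _ x xy(3)])
        show "\<And>a b. a \<in> lcs G H n \<Longrightarrow> b \<in> H \<Longrightarrow> cm a b \<in> lcs G H (Suc n)" by (rule lcs_comm)
        show "\<And>g c. g \<in> lcs G H n \<Longrightarrow> c \<in> lcs G H (Suc n) \<Longrightarrow> g \<otimes> c \<otimes> inv g \<in> lcs G H (Suc n)"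
          using lcs_norm[OF H] Ln(2) by blast
        show "\<And>g c. g \<in> H \<Longrightarrow> c \<in> lcs G H (Suc n) \<Longrightarrow> g \<otimes> c \<otimes> inv g \<in> lcs G H (Suc n)"
          using lcs_norm[OF H] by blast
      qed
    qed
    then show ?case using generate_subgroup_incl T ds_sub by simp
  qed
  obtain c where c: "lcs G H c = {\<one>}" using assms unfolding nilpotent_subgroup_def by blast
  have "dhull {\<one>} \<subseteq> {\<one>}" using dhull(3)[of "{\<one>}"] ds_one by simp
  then have "lcs G (dhull H) c \<subseteq> {\<one>}" using key[of c] c by simp
  then have "lcs G (dhull H) c = {\<one>}" using lcs_one[OF dHs] by blast
  then show ?thesis unfolding nilpotent_subgroup_def using dHs by blast
qed

lemma partA: "max_nilpotent G H \<Longrightarrow> definable G R H"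
proof -
  assume m: "max_nilpotent G H"
  then have n: "nilpotent_subgroup G H" unfolding max_nilpotent_def by simp
  then have Hc: "H \<subseteq> carrier G" unfolding nilpotent_subgroup_def using subgroup.subset by blast
  have "dhull H = H" using m hull_nil[OF n] dhull(2)[OF Hc] unfolding max_nilpotent_def by blast
  then show ?thesis using dhull(1)[OF Hc] unfolding def_subgroup_def by simp
qed

lemma lemmaB: assumes Q: "carter G R Q" and K: "nilpotent_subgroup G K" "Q \<subseteq> K"
  shows "K \<subseteq> normalizer G Q"
proof -
  have Qd: "def_subgroup G R Q" "conn_comp G R Q = Q" "fin_index G Q (normalizer G Q)"
    using Q unfolding carter_def by auto
  have Qc: "Q \<subseteq> carrier G" using Qd ds_carr by blast
  define M where "M = normalizer G Q"
  have Ms: "subgroup M G" using normalizer_imp_subgroup[OF Qc] M_def by simp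
  have QM: "Q \<subseteq> M" using Qd(3) M_def unfolding fin_index_def by simp
  have Ks: "subgroup K G" using K unfolding nilpotent_subgroup_def by simp
  have Kc: "K \<subseteq> carrier G" using Ks subgroup.subset by blast
  have step: "lcs G K n \<subseteq> M" if IH: "lcs G K (Suc n) \<subseteq> M" for n
  proof
    fix z assume z: "z \<in> lcs G K n"
    have Ln: "subgroup (lcs G K n) G" "lcs G K n \<subseteq> K" using lcs_props[OF Ks] by auto
    have gen: "\<forall>q\<in>Q. w \<otimes> q \<otimes> inv w \<in> Q" if w: "w \<in> lcs G K n" for w
    proof -
      have wc: "w \<in> carrier G" using w Ln Kc by blast
      have "w \<otimes> q \<otimes> inv w \<in> normalizer G Q" if q: "q \<in> Q" for q
      proof -
        have qc: "q \<in> carrier G" using q Qc by blast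
        have "cm w q \<in> M" using IH lcs_comm[OF w] q K(2) by blast
        then have "cm w q \<otimes> q \<in> M" using q QM Ms by (simp add: subgroup.m_closed subsetD)
        moreover have "cm w q \<otimes> q = w \<otimes> q \<otimes> inv w" using wc qc by (simp add: m_assoc)
        ultimately show ?thesis using M_def by simp
      qed
      then show ?thesis using SL[OF Qd wc] by blast
    qed
    have zc: "z \<in> carrier G" using z Ln Kc by blast
    have "inv z \<in> lcs G K n" using z Ln by (simp add: subgroup.m_inv_closed)
    then have "\<forall>q\<in>Q. inv z \<otimes> q \<otimes> z \<in> Q" using gen[of "inv z"] zc by simp
    then have "z \<in> nz Q" using gen[OF z] zc unfolding nz_def by simp
    then show "z \<in> M" using normalizer_eq[OF Qc] M_def by simp
  qed
  obtain c where c: "lcs G K c = {\<one>}" using K unfolding nilpotent_subgroup_def by blast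
  have "lcs G K (c - j) \<subseteq> M" for j
  proof (induction j)
    case 0 then show ?case using c Ms subgroup.one_closed by simp
  next
    case (Suc j)
    show ?case
    proof (cases "j < c")
      case True
      then have "c - j = Suc (c - Suc j)" by simp
      then show ?thesis using step Suc by simp
    next
      case False then show ?thesis using Suc by simp
    qed
  qed
  from this[of c] show ?thesis using M_def by simp
qed

end



context dccg begin

lemma partA2: assumes cq: "cartan G Q" shows "carter G R (conn_comp G R Q)"
proof -
  have mn: "max_nilpotent G Q" using cq unfolding cartan_def by simp
  have nQ: "nilpotent_subgroup G Q" using mn unfolding max_nilpotent_def by simp
  have Qs: "subgroup Q G" using nQ unfolding nilpotent_subgroup_def by simp
  have Qc: "Q \<subseteq> carrier G" using Qs subgroup.subset by blast
  have Qd: "def_subgroup G R Q" using partA[OF mn] Qs unfolding def_subgroup_def by simp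
  define P where "P = conn_comp G R Q"
  have Pd: "def_subgroup G R P" "fin_index G P Q" using cc[OF Qd] P_def by auto
  have Ps: "subgroup P G" using Pd ds_sub by blast
  have PQ: "P \<subseteq> Q" using Pd unfolding fin_index_def by simp
  have c1: "conn_comp G R P = P"
  proof
    show "conn_comp G R P \<subseteq> P" using cc_le[OF Pd(1) fi_refl[OF Ps]] .
    have "P \<subseteq> K" if "def_subgroup G R K" "fin_index G K P" for K
    proof -
      have "fin_index G K Q" using fi_trans[OF ds_sub[OF that(1)] Ps that(2) Pd(2) Qc] .
      then show ?thesis using cc_le[OF that(1)] P_def by simp
    qed
    then show "P \<subseteq> conn_comp G R P" unfolding conn_comp_def by blast
  qed
  have nP: "nilpotent_subgroup G P"
  proof -
    obtain c where c: "lcs G Q c = {\<one>}" using nQ unfolding nilpotent_subgroup_def by blast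
    have "lcs G P c \<subseteq> {\<one>}" using lcs_mono[OF PQ, of c] c by simp
    then have "lcs G P c = {\<one>}" using lcs_one[OF Ps] by blast
    then show ?thesis unfolding nilpotent_subgroup_def using Ps by blast
  qed
  have conjP: "\<forall>h\<in>P. q \<otimes> h \<otimes> inv q \<in> P" if q: "q \<in> Q" for q
  proof -
    have qc: "q \<in> carrier G" using q Qc by blast
    have "\<forall>x\<in>Q. q \<otimes> x \<otimes> inv q \<in> Q" using q Qs by (simp add: subgroup.m_closed subgroup.m_inv_closed)
    then have "fin_index G (Q \<inter> cj q P) Q" using conjfin[OF Qs Ps Pd(2) qc Qc] by blast
    moreover have "def_subgroup G R (cj q P)"
      using Pd(1) qc cj_definable cj_subgroup unfolding def_subgroup_def by blast
    then have "def_subgroup G R (Q \<inter> cj q P)" using Qd ds_int by blast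
    ultimately have "P \<subseteq> Q \<inter> cj q P" using cc_le P_def by blast
    then show ?thesis unfolding cj_def by blast
  qed
  have normP: "P \<lhd> (G\<lparr>carrier := Q\<rparr>)"
  proof -
    interpret GQ: group "G\<lparr>carrier := Q\<rparr>" using subgroup_imp_group[OF Qs] .
    show ?thesis unfolding GQ.normal_inv_iff
    proof (intro conjI ballI)
      show "subgroup P (G\<lparr>carrier := Q\<rparr>)" using subgroup_incl[OF Ps Qs PQ] .
      fix x h assume x: "x \<in> carrier (G\<lparr>carrier := Q\<rparr>)" and h: "h \<in> P"
      then have xQ: "x \<in> Q" by simp
      then show "x \<otimes>\<^bsub>G\<lparr>carrier := Q\<rparr>\<^esub> h \<otimes>\<^bsub>G\<lparr>carrier := Q\<rparr>\<^esub> inv\<^bsub>G\<lparr>carrier := Q\<rparr>\<^esub> x \<in> P"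
        using conjP[OF xQ] h m_inv_consistent[OF Qs xQ] by simp
    qed
  qed
  have "fin_index G P (normalizer G P)" using cq normP Pd(2) unfolding cartan_def by blast
  then show ?thesis unfolding carter_def P_def[symmetric] using Pd(1) c1 nP by simp
qed

lemma exists_max: assumes cq: "carter G R Q" shows "\<exists>Q'. max_nilpotent G Q' \<and> Q \<subseteq> Q'"
proof -
  have Qd: "def_subgroup G R Q" "nilpotent_subgroup G Q" "fin_index G Q (normalizer G Q)"
    using cq unfolding carter_def by auto
  have Qs: "subgroup Q G" using Qd ds_sub by blast
  define M where "M = normalizer G Q"
  define cos where "cos K = {Q #> k | k. k \<in> K}" for K
  have fM: "finite (cos M)" using Qd(3) unfolding M_def cos_def fin_index_def by simp
  define P where "P n = (\<exists>K. nilpotent_subgroup G K \<and> Q \<subseteq> K \<and> card (cos K) = n)" for n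
  have sub: "cos K \<subseteq> cos M" if "nilpotent_subgroup G K" "Q \<subseteq> K" for K
  proof
    fix C assume "C \<in> cos K"
    then obtain k where k: "k \<in> K" "C = Q #> k" unfolding cos_def by blast
    then have "k \<in> M" using lemmaB[OF cq that] M_def by blast
    then show "C \<in> cos M" using k(2) unfolding cos_def by blast
  qed
  have "P (card (cos Q))" unfolding P_def using Qd(2) by blast
  moreover have "\<forall>y. P y \<longrightarrow> y \<le> card (cos M)"
  proof (intro allI impI)
    fix y assume "P y"
    then obtain K where K: "nilpotent_subgroup G K" "Q \<subseteq> K" "card (cos K) = y" unfolding P_def by blast
    show "y \<le> card (cos M)" using card_mono[OF fM sub[OF K(1,2)]] K(3) by simp
  qed
  ultimately have "\<exists>x. P x \<and> (\<forall>y. P y \<longrightarrow> y \<le> x)" by (rule Nat.ex_has_greatest_nat)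
  then obtain n where n: "P n" "\<forall>y. P y \<longrightarrow> y \<le> n" by blast
  then obtain K where K: "nilpotent_subgroup G K" "Q \<subseteq> K" "card (cos K) = n" unfolding P_def by blast
  have Ks: "subgroup K G" using K unfolding nilpotent_subgroup_def by simp
  have "max_nilpotent G K" unfolding max_nilpotent_def
  proof (intro conjI allI impI)
    show "nilpotent_subgroup G K" by (rule K(1))
    fix K' assume a: "nilpotent_subgroup G K' \<and> K \<subseteq> K'"
    then have QK': "Q \<subseteq> K'" using K by blast
    have K's: "subgroup K' G" using a unfolding nilpotent_subgroup_def by simp
    have f': "finite (cos K')" using finite_subset[OF sub[of K'] fM] a QK' by blast
    have ss: "cos K \<subseteq> cos K'"
    proof
      fix C assume "C \<in> cos K"
      then obtain k where k: "k \<in> K" "C = Q #> k" unfolding cos_def by blast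
      then show "C \<in> cos K'" using a unfolding cos_def by blast
    qed
    have "P (card (cos K'))" unfolding P_def using a QK' by blast
    then have "card (cos K') \<le> n" using n(2) by blast
    then have "card (cos K) = card (cos K')" using K(3) card_mono[OF f' ss] by simp
    then have eq: "cos K = cos K'" using card_subset_eq[OF f' ss] by simp
    show "K' = K"
    proof
      show "K' \<subseteq> K"
      proof
        fix k' assume k': "k' \<in> K'"
        have k'c: "k' \<in> carrier G" using k' K's subgroup.subset by blast
        have "Q #> k' \<in> cos K'" using k' unfolding cos_def by blast
        then have "Q #> k' \<in> cos K" using eq by simp
        then obtain k where k: "k \<in> K" "Q #> k' = Q #> k" unfolding cos_def by blast
        have "k' \<in> Q #> k" using rcos_self[OF k'c Qs] k(2) by simp
        then obtain h where h: "h \<in> Q" "k' = h \<otimes> k" unfolding r_coset_def by blast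
        then have "h \<in> K" using K(2) by blast
        then show "k' \<in> K" using h(2) k(1) subgroup.m_closed[OF Ks] by simp
      qed
      show "K \<subseteq> K'" using a by simp
    qed
  qed
  then show ?thesis using K(2) by blast
qed

lemma NL: assumes cq: "carter G R Q" and QQ': "Q \<subseteq> Q'" and Q'M: "Q' \<subseteq> normalizer G Q"
  and N: "subgroup N G" "fin_index G N Q'" and w: "w \<in> carrier G" "\<forall>x\<in>N. w \<otimes> x \<otimes> inv w \<in> N"
  shows "\<forall>q\<in>Q. w \<otimes> q \<otimes> inv w \<in> Q"
proof -
  have Qd: "def_subgroup G R Q" "conn_comp G R Q = Q" "fin_index G Q (normalizer G Q)"
    using cq unfolding carter_def by auto
  have Qs: "subgroup Q G" using Qd ds_sub by blast
  have Qc: "Q \<subseteq> carrier G" using Qd ds_carr by blast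
  define M where "M = normalizer G Q"
  have Md: "def_subgroup G R M" using nz_ds[OF Qd(1)] normalizer_eq[OF Qc] M_def by simp
  have NQ': "N \<subseteq> Q'" using N(2) unfolding fin_index_def by simp
  have A: "fin_index G (N \<inter> Q) Q" using fi_restrict[OF N(1) Qs N(2) QQ'] .
  have "def_subgroup G R (cj w M)" using Md w(1) cj_definable cj_subgroup unfolding def_subgroup_def by blast
  then have Yd: "def_subgroup G R (Q \<inter> cj w M)" using Qd(1) ds_int by blast
  have AY: "N \<inter> Q \<subseteq> Q \<inter> cj w M" using w(2) NQ' Q'M Qc unfolding cj_def M_def by blast
  have "fin_index G (Q \<inter> cj w M) Q"
    using fi_super[OF subgroups_Inter_pair[OF N(1) Qs] ds_sub[OF Yd] A AY _ Qc] by blast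
  then have "Q \<subseteq> Q \<inter> cj w M" using cc_le[OF Yd] Qd(2) by metis
  then have "\<forall>q\<in>Q. w \<otimes> q \<otimes> inv w \<in> normalizer G Q" unfolding cj_def M_def by blast
  then show ?thesis using SL[OF Qd w(1)] by blast
qed

lemma partB2: assumes cq: "carter G R Q" and mQ': "max_nilpotent G Q'" and QQ': "Q \<subseteq> Q'"
  shows "cartan G Q' \<and> conn_comp G R Q' = Q"
proof -
  have Qd: "def_subgroup G R Q" "conn_comp G R Q = Q" "fin_index G Q (normalizer G Q)"
    using cq unfolding carter_def by auto
  have Qs: "subgroup Q G" using Qd ds_sub by blast
  have Qc: "Q \<subseteq> carrier G" using Qd ds_carr by blast
  define M where "M = normalizer G Q"
  have Ms: "subgroup M G" using normalizer_imp_subgroup[OF Qc] M_def by simp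
  have Mc: "M \<subseteq> carrier G" using Ms subgroup.subset by blast
  have nQ': "nilpotent_subgroup G Q'" using mQ' unfolding max_nilpotent_def by simp
  have Q's: "subgroup Q' G" using nQ' unfolding nilpotent_subgroup_def by simp
  have Q'M: "Q' \<subseteq> M" using lemmaB[OF cq nQ' QQ'] M_def by simp
  have Q'd: "def_subgroup G R Q'" using partA[OF mQ'] Q's unfolding def_subgroup_def by simp
  have fQM: "fin_index G Q M" using Qd(3) M_def by simp
  have fQQ': "fin_index G Q Q'" using fi_sub[OF fQM QQ' Q'M] .
  have fQ'M: "fin_index G Q' M" using fi_super[OF Qs Q's fQM QQ' Q'M Mc] .
  have ccQ': "conn_comp G R Q' = Q"
  proof
    show "conn_comp G R Q' \<subseteq> Q" using cc_le[OF Qd(1) fQQ'] .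
    have "Q \<subseteq> K" if K: "def_subgroup G R K" "fin_index G K Q'" for K
    proof -
      have "fin_index G (K \<inter> Q) Q" using fi_restrict[OF ds_sub[OF K(1)] Qs K(2) QQ'] .
      moreover have "def_subgroup G R (K \<inter> Q)" using ds_int[OF K(1) Qd(1)] .
      ultimately have "conn_comp G R Q \<subseteq> K \<inter> Q" using cc_le by blast
      then show ?thesis using Qd(2) by blast
    qed
    then show "Q \<subseteq> conn_comp G R Q'" unfolding conn_comp_def by blast
  qed
  have "cartan G Q'" unfolding cartan_def
  proof (intro conjI allI impI)
    show "max_nilpotent G Q'" by (rule mQ')
    fix N assume a: "N \<lhd> G\<lparr>carrier := Q'\<rparr> \<and> fin_index G N Q'"
    interpret GQ: group "G\<lparr>carrier := Q'\<rparr>" using subgroup_imp_group[OF Q's] .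
    have Ns: "subgroup N G" using incl_subgroup[OF Q's normal_imp_subgroup] a by blast
    have Nc: "N \<subseteq> carrier G" using Ns subgroup.subset by blast
    have NQ': "N \<subseteq> Q'" using a unfolding fin_index_def by simp
    have "normalizer G N \<subseteq> M"
    proof
      fix g assume "g \<in> normalizer G N"
      then have g: "g \<in> nz N" using normalizer_eq[OF Nc] by simp
      then have gc: "g \<in> carrier G" "\<forall>x\<in>N. g \<otimes> x \<otimes> inv g \<in> N" "\<forall>x\<in>N. inv g \<otimes> x \<otimes> g \<in> N"
        unfolding nz_def by auto
      have 1: "\<forall>q\<in>Q. g \<otimes> q \<otimes> inv g \<in> Q"
        using NL[OF cq QQ' Q'M[unfolded M_def] Ns conjunct2[OF a] gc(1,2)] .
      have 2: "\<forall>q\<in>Q. inv g \<otimes> q \<otimes> inv (inv g) \<in> Q"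
        using NL[OF cq QQ' Q'M[unfolded M_def] Ns conjunct2[OF a], of "inv g"] gc by simp
      have "g \<in> nz Q" using 1 2 gc(1) unfolding nz_def by simp
      then show "g \<in> M" using normalizer_eq[OF Qc] M_def by simp
    qed
    moreover have "N \<subseteq> normalizer G N"
    proof
      fix x assume x: "x \<in> N"
      then have "x \<in> nz N" unfolding nz_def using Ns Nc
        by (auto simp: subgroup.m_closed subgroup.m_inv_closed)
      then show "x \<in> normalizer G N" using normalizer_eq[OF Nc] by simp
    qed
    moreover have "fin_index G N M" using fi_trans[OF Ns Q's conjunct2[OF a] fQ'M Mc] .
    ultimately show "fin_index G N (normalizer G N)" using fi_sub by blast
  qed
  then show ?thesis using ccQ' by simp
qed

end

theorem lemma2p4:
  fixes G :: "('a, 'b) monoid_scheme" and R :: "'r \<Rightarrow> 'a list set"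
  assumes "group G" and "dcc G R"
  shows "(\<forall>H. max_nilpotent G H \<longrightarrow> definable G R H)
    \<and> (\<forall>Q. cartan G Q \<longrightarrow> definable G R Q \<and> carter G R (conn_comp G R Q))
    \<and> (\<forall>Q. carter G R Q \<longrightarrow>
          (\<exists>Q'. max_nilpotent G Q' \<and> Q \<subseteq> Q') \<and>
          (\<forall>Q'. max_nilpotent G Q' \<and> Q \<subseteq> Q' \<longrightarrow> cartan G Q' \<and> conn_comp G R Q' = Q))"
proof -
  interpret dccg G R using assms by (simp add: dccg_def dccg_axioms_def)
  have 1: "\<forall>H. max_nilpotent G H \<longrightarrow> definable G R H" using partA by blast
  have 2: "\<forall>Q. cartan G Q \<longrightarrow> definable G R Q \<and> carter G R (conn_comp G R Q)"
  proof (intro allI impI conjI)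
    fix Q assume c: "cartan G Q"
    then have "max_nilpotent G Q" unfolding cartan_def by simp
    then show "definable G R Q" by (rule partA)
    show "carter G R (conn_comp G R Q)" using c by (rule partA2)
  qed
  have 3: "\<forall>Q. carter G R Q \<longrightarrow>
          (\<exists>Q'. max_nilpotent G Q' \<and> Q \<subseteq> Q') \<and>
          (\<forall>Q'. max_nilpotent G Q' \<and> Q \<subseteq> Q' \<longrightarrow> cartan G Q' \<and> conn_comp G R Q' = Q)"
  proof (intro allI impI conjI)
    fix Q assume c: "carter G R Q"
    then show "\<exists>Q'. max_nilpotent G Q' \<and> Q \<subseteq> Q'" by (rule exists_max)
    fix Q' assume "max_nilpotent G Q' \<and> Q \<subseteq> Q'"
    then show "cartan G Q'" "conn_comp G R Q' = Q" using partB2[OF c] by blast+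
  qed
  show ?thesis using 1 2 3 by (rule conjI[OF _ conjI])
qed


end
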